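(* Let $q$ be a prime power, let $\mathbb{F}=\mathrm{GF}(q^2)$, and let $H\subseteq \mathbb{F}^\ast$ be the (unique) subgroup of the multiplicative group of order $q+1$. Let $G(q^2,q+1)$ be the graph whose vertex set is $(\mathbb{F}\times\mathbb{F}\setminus\{(0,0)\})/\sim$, where $(a_1,b_1)\sim(a_2,b_2)$ iff there is $h\in H$ with $a_1=ha_2$ and $b_1=hb_2$, and in which two distinct vertices $\langle a,b\rangle$ and $\langle x,y\rangle$ are adjacent iff $ax+by\in H$. Then $G(q^2,q+1)$ is $K_{3,3}$-free.
   Context: $\langle a,b\rangle$ denotes the equivalence class of the pair $(a,b)$; the adjacency condition does not depend on the chosen representatives. The graph is simple (no loops). A graph is $K_{s,t}$-free if it contains no (not necessarily induced) subgraph isomorphic to the complete bipartite graph $K_{s,t}$. *)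

theory Defs
  imports "HOL-Computational_Algebra.Primes"
begin

definition pair_sim :: "'a::field set \<Rightarrow> (('a \<times> 'a) \<times> ('a \<times> 'a)) set" where
  "pair_sim H = {((a1, b1), (a2, b2)).
      (a1, b1) \<noteq> (0, 0) \<and> (a2, b2) \<noteq> (0, 0) \<and> (\<exists>h\<in>H. a1 = h * a2 \<and> b1 = h * b2)}"

definition GH_vertices :: "'a::field set \<Rightarrow> ('a \<times> 'a) set set" where
  "GH_vertices H = (UNIV - {(0, 0)}) // pair_sim H"

text \<open>Adjacency: distinct classes <a,b>, <x,y> with a x + b y in H
  (independent of representatives).\<close>
definition GH_adj :: "'a::field set \<Rightarrow> ('a \<times> 'a) set \<Rightarrow> ('a \<times> 'a) set \<Rightarrow> bool" where
  "GH_adj H U W \<longleftrightarrow> U \<noteq> W \<and>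
     (\<exists>a b x y. (a, b) \<in> U \<and> (x, y) \<in> W \<and> a * x + b * y \<in> H)"

definition Kst_free :: "'v set \<Rightarrow> ('v \<Rightarrow> 'v \<Rightarrow> bool) \<Rightarrow> nat \<Rightarrow> nat \<Rightarrow> bool" where
  "Kst_free V adj s t \<longleftrightarrow>
     \<not> (\<exists>A B. A \<subseteq> V \<and> B \<subseteq> V \<and> A \<inter> B = {} \<and> finite A \<and> finite B \<and>
            card A = s \<and> card B = t \<and> (\<forall>u\<in>A. \<forall>w\<in>B. adj u w))"

end

theory Submission
  imports Defs "HOL-Number_Theory.Residues"
begin

lemma quad3:
  fixes A B C t1 t2 t3 :: "'a::field"
  assumes "A \<noteq> 0" "A*t1^2+B*t1+C = 0" "A*t2^2+B*t2+C = 0" "A*t3^2+B*t3+C = 0"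
    "t1 \<noteq> t2" "t1 \<noteq> t3" "t2 \<noteq> t3"
  shows False
proof -
  have e: "(t1 - t2) * (A*(t1+t2)+B) = 0" "(t1 - t3) * (A*(t1+t3)+B) = 0"
    using assms by (simp_all add: algebra_simps power2_eq_square; metis add.commute add_diff_cancel_left' right_minus_eq)+
  hence "A*(t1+t2)+B = 0" "A*(t1+t3)+B = 0" using assms by auto
  moreover have "A * (t2 - t3) = (A*(t1+t2)+B) - (A*(t1+t3)+B)" by (simp add: algebra_simps)
  ultimately have "A * (t2 - t3) = 0" by simp
  thus False using assms by simp
qed

lemma circle:
  fixes \<alpha> \<beta> t :: "'a::field"
  assumes frob: "\<And>x y::'a. (x+y)^q = x^q + y^q"
    and t: "t^(q+1) = 1" and u: "(\<alpha>+\<beta>*t)^(q+1) = 1"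
  shows "(\<alpha>^q*\<beta>)*t^2 + (\<alpha>^(q+1)+\<beta>^(q+1)-1)*t + \<alpha>*\<beta>^q = 0"
proof -
  have tq: "t * t^q = 1" using t by simp
  have uq: "(\<alpha>+\<beta>*t)^q = \<alpha>^q + \<beta>^q * t^q" using frob by (simp add: power_mult_distrib)
  have "t = t * ((\<alpha>+\<beta>*t) * (\<alpha>+\<beta>*t)^q)" using u by simp
  also have "\<dots> = (\<alpha>+\<beta>*t) * (\<alpha>^q * t + \<beta>^q * (t * t^q))" unfolding uq by (simp add: algebra_simps)
  also have "\<dots> = (\<alpha>+\<beta>*t) * (\<alpha>^q * t + \<beta>^q)" using tq by simp
  finally have "t = (\<alpha>+\<beta>*t) * (\<alpha>^q * t + \<beta>^q)" .
  thus ?thesis by (simp add: algebra_simps power2_eq_square)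
qed

lemma lin_indep:
  fixes u v x1 y1 x2 y2 :: "'a::field"
  assumes "x1*y2 - x2*y1 \<noteq> 0" "u*x1 + v*y1 = 0" "u*x2 + v*y2 = 0"
  shows "u = 0 \<and> v = 0"
proof -
  have "u * (x1*y2 - x2*y1) = (u*x1 + v*y1)*y2 - (u*x2 + v*y2)*y1" by (simp add: algebra_simps)
  moreover have "v * (x1*y2 - x2*y1) = (u*x2 + v*y2)*x1 - (u*x1 + v*y1)*x2" by (simp add: algebra_simps)
  ultimately show ?thesis using assms by simp
qed

lemma core:
  fixes H :: "'a::field set"
  assumes H0: "0 \<notin> H"
    and Hm: "\<And>x y. x \<in> H \<Longrightarrow> y \<in> H \<Longrightarrow> x * y \<in> H"
    and Hi: "\<And>x. x \<in> H \<Longrightarrow> inverse x \<in> H"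
    and Hq: "\<And>t. t \<in> H \<Longrightarrow> t^(q+1) = 1"
    and frob: "\<And>x y::'a. (x+y)^q = x^q + y^q"
    and p11: "a1*x1 + b1*y1 \<in> H" and p12: "a1*x2 + b1*y2 \<in> H" and p13: "a1*x3 + b1*y3 \<in> H"
    and p21: "a2*x1 + b2*y1 \<in> H" and p22: "a2*x2 + b2*y2 \<in> H" and p23: "a2*x3 + b2*y3 \<in> H"
    and p31: "a3*x1 + b3*y1 \<in> H" and p32: "a3*x2 + b3*y2 \<in> H" and p33: "a3*x3 + b3*y3 \<in> H"
    and nx12: "\<not> (\<exists>h\<in>H. x2 = h*x1 \<and> y2 = h*y1)"
    and nx13: "\<not> (\<exists>h\<in>H. x3 = h*x1 \<and> y3 = h*y1)"
    and nx23: "\<not> (\<exists>h\<in>H. x3 = h*x2 \<and> y3 = h*y2)"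
    and na12: "\<not> (\<exists>h\<in>H. a2 = h*a1 \<and> b2 = h*b1)"
    and na13: "\<not> (\<exists>h\<in>H. a3 = h*a1 \<and> b3 = h*b1)"
    and na23: "\<not> (\<exists>h\<in>H. a3 = h*a2 \<and> b3 = h*b2)"
  shows False
proof (cases "x1*y2 - x2*y1 = 0")
  case True
  define h1 where "h1 = a1*x1 + b1*y1"
  define h2 where "h2 = a1*x2 + b1*y2"
  have h1H: "h1 \<in> H" and h2H: "h2 \<in> H" using p11 p12 by (simp_all add: h1_def h2_def)
  have h1nz: "h1 \<noteq> 0" using h1H H0 by auto
  have e1: "h1*x2 - h2*x1 = - b1*(x1*y2 - x2*y1)" by (simp add: h1_def h2_def algebra_simps)
  have e2: "h1*y2 - h2*y1 = a1*(x1*y2 - x2*y1)" by (simp add: h1_def h2_def algebra_simps)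
  have "x2 = (h2 * inverse h1) * x1" using e1 True h1nz by (simp add: field_simps)
  moreover have "y2 = (h2 * inverse h1) * y1" using e2 True h1nz by (simp add: field_simps)
  moreover have "h2 * inverse h1 \<in> H" using Hm Hi h1H h2H by blast
  ultimately show False using nx12 by blast
next
  case False
  define D where "D = x1*y2 - x2*y1"
  have D: "D \<noteq> 0" using False by (simp add: D_def)
  define \<alpha> where "\<alpha> = (x3*y2 - x2*y3)/D"
  define \<beta> where "\<beta> = (x1*y3 - x3*y1)/D"
  have "\<alpha>*x1 + \<beta>*x2 = ((x3*y2 - x2*y3)*x1 + (x1*y3 - x3*y1)*x2)/D"
    unfolding \<alpha>_def \<beta>_def by (simp add: add_divide_distrib)
  also have "\<dots> = x3*D/D" by (simp add: D_def algebra_simps)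
  finally have x3: "x3 = \<alpha>*x1 + \<beta>*x2" using D by simp
  have "\<alpha>*y1 + \<beta>*y2 = ((x3*y2 - x2*y3)*y1 + (x1*y3 - x3*y1)*y2)/D"
    unfolding \<alpha>_def \<beta>_def by (simp add: add_divide_distrib)
  also have "\<dots> = y3*D/D" by (simp add: D_def algebra_simps)
  finally have y3: "y3 = \<alpha>*y1 + \<beta>*y2" using D by simp
  define T where "T a b = (a*x2+b*y2) * inverse (a*x1+b*y1)" for a b
  have TH: "T a b \<in> H" and uH: "\<alpha> + \<beta> * T a b \<in> H"
    if "a*x1+b*y1 \<in> H" "a*x2+b*y2 \<in> H" "a*x3+b*y3 \<in> H" for a b
  proof -
    have nz: "a*x1+b*y1 \<noteq> 0" using that H0 by auto
    show "T a b \<in> H" unfolding T_def using that Hm Hi by blast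
    have "\<alpha> + \<beta> * T a b = (a*x3+b*y3) * inverse (a*x1+b*y1)"
      unfolding T_def x3 y3 using nz by (simp add: field_simps)
    thus "\<alpha> + \<beta> * T a b \<in> H" using that Hm Hi by metis
  qed
  have same: "\<exists>h\<in>H. a' = h*a \<and> b' = h*b"
    if "a*x1+b*y1 \<in> H" "a'*x1+b'*y1 \<in> H" "T a b = T a' b'" for a b a' b'
  proof -
    define s where "s = (a'*x1+b'*y1) * inverse (a*x1+b*y1)"
    have nz: "a*x1+b*y1 \<noteq> 0" "a'*x1+b'*y1 \<noteq> 0" using that H0 by auto
    have sH: "s \<in> H" unfolding s_def using that Hm Hi by blast
    have "(a' - s*a)*x1 + (b' - s*b)*y1 = (a'*x1+b'*y1) - s * (a*x1+b*y1)"
      by (simp add: algebra_simps)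
    hence E1: "(a' - s*a)*x1 + (b' - s*b)*y1 = 0" unfolding s_def using nz by simp
    have "(a*x2+b*y2) * inverse (a*x1+b*y1) = (a'*x2+b'*y2) * inverse (a'*x1+b'*y1)"
      using that(3) unfolding T_def .
    hence "a'*x2+b'*y2 = s * (a*x2+b*y2)" unfolding s_def using nz
      by (simp add: field_simps)
    moreover have "(a' - s*a)*x2 + (b' - s*b)*y2 = (a'*x2+b'*y2) - s * (a*x2+b*y2)"
      by (simp add: algebra_simps)
    ultimately have E2: "(a' - s*a)*x2 + (b' - s*b)*y2 = 0" by simp
    have "a' - s*a = 0 \<and> b' - s*b = 0" using lin_indep[of x1 y2 x2 y1, OF _ E1 E2] D D_def by blast
    thus ?thesis using sH by auto
  qed
  have T1: "T a1 b1 \<in> H" "\<alpha> + \<beta> * T a1 b1 \<in> H" using TH uH p11 p12 p13 by auto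
  have T2: "T a2 b2 \<in> H" "\<alpha> + \<beta> * T a2 b2 \<in> H" using TH uH p21 p22 p23 by auto
  have T3: "T a3 b3 \<in> H" "\<alpha> + \<beta> * T a3 b3 \<in> H" using TH uH p31 p32 p33 by auto
  have d12: "T a1 b1 \<noteq> T a2 b2" using same[OF p11 p21] na12 by blast
  have d13: "T a1 b1 \<noteq> T a3 b3" using same[OF p11 p31] na13 by blast
  have d23: "T a2 b2 \<noteq> T a3 b3" using same[OF p21 p31] na23 by blast
  show False
  proof (cases "\<beta> = 0")
    case True
    hence "\<alpha> \<in> H" using T1 by simp
    thus False using nx13 x3 y3 True by auto
  next
    case b: False
    show False
    proof (cases "\<alpha> = 0")
      case True
      have "T a1 b1 \<noteq> 0" using T1 H0 by metis
      hence "\<beta> = (\<beta> * T a1 b1) * inverse (T a1 b1)" by simp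
      hence "\<beta> \<in> H" using T1 True Hm Hi by (metis add_0)
      thus False using nx23 x3 y3 True by auto
    next
      case a: False
      have A: "\<alpha>^q*\<beta> \<noteq> 0" using a b by simp
      have "\<And>t. t \<in> H \<Longrightarrow> \<alpha> + \<beta> * t \<in> H \<Longrightarrow>
          (\<alpha>^q*\<beta>)*t^2 + (\<alpha>^(q+1)+\<beta>^(q+1)-1)*t + \<alpha>*\<beta>^q = 0"
        using circle[OF frob] Hq by blast
      thus False using quad3[OF A _ _ _ d12 d13 d23] T1 T2 T3 by blast
    qed
  qed
qed

lemma H_pow:
  fixes H :: "'a::{field,finite} set"
  assumes H0: "0 \<notin> H" and Hm: "\<And>x y. x \<in> H \<Longrightarrow> y \<in> H \<Longrightarrow> x * y \<in> H"
    and t: "t \<in> H"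
  shows "t ^ card H = 1"
proof -
  have fin: "finite H" by simp
  have t0: "t \<noteq> 0" using t H0 by auto
  have inj: "inj_on ((*) t) H" using t0 by (auto simp: inj_on_def)
  have sub: "(*) t ` H \<subseteq> H" using Hm t by auto
  have img: "(*) t ` H = H"
    using card_subset_eq[OF fin sub] card_image[OF inj] by simp
  have "prod id H = prod id ((*) t ` H)" using img by simp
  also have "\<dots> = prod ((*) t) H" using prod.reindex[OF inj] by simp
  also have "\<dots> = t ^ card H * prod id H" by (simp add: prod.distrib)
  finally have "prod id H = t ^ card H * prod id H" .
  moreover have "prod id H \<noteq> 0" using H0 fin by (auto simp: prod_zero_iff)
  ultimately show ?thesis by simp
qed

lemma frob_q:
  fixes q :: nat
  assumes "\<exists>p k. prime p \<and> k \<ge> 1 \<and> q = p ^ k"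
    and "card (UNIV :: 'a::{field,finite} set) = q ^ 2"
  shows "(x + y :: 'a) ^ q = x ^ q + y ^ q"
proof -
  obtain p k where pk: "prime p" "k \<ge> 1" "q = p ^ k" using assms(1) by blast
  have cpos: "CHAR('a) > 0" by (rule finite_imp_CHAR_pos) simp
  have cp: "prime CHAR('a)" by (rule prime_CHAR_semidom[OF cpos])
  have "CHAR('a) dvd p ^ (k*2)" using CHAR_dvd_CARD[where 'a='a] assms(2) pk
    by (simp add: power_mult)
  hence "CHAR('a) dvd p" using cp prime_dvd_power by blast
  hence "CHAR('a) = p" using cp pk(1) primes_dvd_imp_eq by blast
  thus ?thesis using freshmans_dream'[OF cp, of q k] pk by simp
qed

lemma ps_iff: "((a1,b1),(a2,b2)) \<in> pair_sim H \<longleftrightarrow>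
   (a1,b1) \<noteq> (0,0) \<and> (a2,b2) \<noteq> (0,0) \<and> (\<exists>h\<in>H. a1 = h*a2 \<and> b1 = h*b2)"
  by (simp add: pair_sim_def)

lemma equiv_ps:
  fixes H :: "'a::field set"
  assumes H0: "0 \<notin> H" and H1: "1 \<in> H"
    and Hm: "\<And>x y. x \<in> H \<Longrightarrow> y \<in> H \<Longrightarrow> x * y \<in> H"
    and Hi: "\<And>x. x \<in> H \<Longrightarrow> inverse x \<in> H"
  shows "equiv (UNIV - {(0,0)}) (pair_sim H)"
proof (rule equivI)
  show "refl_on (UNIV - {(0, 0)}) (pair_sim H)"
    unfolding refl_on_def pair_sim_def using H1 by force
  show "sym (pair_sim H)"
  proof (rule symI)
    fix u v assume uv: "(u, v) \<in> pair_sim H"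
    obtain a1 b1 a2 b2 where uv': "u = (a1,b1)" "v = (a2,b2)" by (cases u, cases v) auto
    obtain h where e: "h \<in> H"
      "a1 = h*a2" "b1 = h*b2" "(a1,b1) \<noteq> (0,0)" "(a2,b2) \<noteq> (0,0)"
      using uv unfolding uv' ps_iff by blast
    have "h \<noteq> 0" using e H0 by auto
    hence "a2 = inverse h * a1 \<and> b2 = inverse h * b1" using e by auto
    thus "(v, u) \<in> pair_sim H" using e Hi unfolding uv' pair_sim_def by auto
  qed
  show "trans (pair_sim H)"
  proof (rule transI)
    fix u v w assume uv: "(u, v) \<in> pair_sim H" and vw: "(v, w) \<in> pair_sim H"
    obtain a1 b1 a2 b2 a3 b3 where uv': "u = (a1,b1)" "v = (a2,b2)" "w = (a3,b3)"
      by (cases u, cases v, cases w) auto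
    obtain h g where e: "h \<in> H"
      "a1 = h*a2" "b1 = h*b2" "(a1,b1) \<noteq> (0,0)" "g \<in> H" "a2 = g*a3" "b2 = g*b3" "(a3,b3) \<noteq> (0,0)"
      using uv vw unfolding uv' ps_iff by blast
    hence "a1 = (h*g)*a3 \<and> b1 = (h*g)*b3" by (simp add: mult.assoc)
    thus "(u, w) \<in> pair_sim H" using e Hm unfolding uv' pair_sim_def by auto
  qed
  show "pair_sim H \<subseteq> (UNIV - {(0, 0)}) \<times> (UNIV - {(0, 0)})"
    unfolding pair_sim_def by auto
qed

lemma same_class_rel:
  assumes eq: "equiv (UNIV - {(0,0)}) (pair_sim H)"
    and U: "U \<in> GH_vertices H" and z: "z \<in> U" "z' \<in> U"
  shows "(z, z') \<in> pair_sim H"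
  using quotient_eq_iff[OF eq, of U U z z'] U z unfolding GH_vertices_def by simp

lemma adj_rep:
  fixes H :: "'a::field set"
  assumes eq: "equiv (UNIV - {(0,0)}) (pair_sim H)"
    and Hm: "\<And>x y. x \<in> H \<Longrightarrow> y \<in> H \<Longrightarrow> x * y \<in> H"
    and U: "U \<in> GH_vertices H" and W: "W \<in> GH_vertices H" and adj: "GH_adj H U W"
    and ab: "(a,b) \<in> U" and xy: "(x,y) \<in> W"
  shows "a*x + b*y \<in> H"
proof -
  obtain a0 b0 x0 y0 where 0: "(a0,b0) \<in> U" "(x0,y0) \<in> W" "a0*x0+b0*y0 \<in> H"
    using adj unfolding GH_adj_def by blast
  obtain h where h: "h \<in> H" "a = h*a0" "b = h*b0"
    using same_class_rel[OF eq U ab 0(1)] unfolding pair_sim_def by auto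
  obtain g where g: "g \<in> H" "x = g*x0" "y = g*y0"
    using same_class_rel[OF eq W xy 0(2)] unfolding pair_sim_def by auto
  have "a*x + b*y = (h*g)*(a0*x0+b0*y0)" using h g by (simp add: algebra_simps)
  thus ?thesis using Hm h g 0 by metis
qed

lemma distinct_rep:
  fixes H :: "'a::field set"
  assumes eq: "equiv (UNIV - {(0,0)}) (pair_sim H)"
    and U: "U \<in> GH_vertices H" and U': "U' \<in> GH_vertices H" and ne: "U \<noteq> U'"
    and xy: "(x,y) \<in> U" and xy': "(x',y') \<in> U'"
  shows "\<not> (\<exists>h\<in>H. x' = h*x \<and> y' = h*y)"
proof
  assume "\<exists>h\<in>H. x' = h*x \<and> y' = h*y"
  then obtain h where h: "h \<in> H" "x' = h*x" "y' = h*y" by blast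
  have "U \<subseteq> UNIV - {(0,0)}" "U' \<subseteq> UNIV - {(0,0)}"
    using in_quotient_imp_subset[OF eq] U U' unfolding GH_vertices_def by auto
  hence "(x',y') \<noteq> (0,0)" "(x,y) \<noteq> (0,0)" using xy xy' by auto
  hence "((x',y'),(x,y)) \<in> pair_sim H" using h unfolding pair_sim_def by auto
  hence "U' = U" using quotient_eq_iff[OF eq, of U' U "(x',y')" "(x,y)"] U U' xy xy'
    unfolding GH_vertices_def by simp
  thus False using ne by simp
qed

lemma rep_ex:
  assumes eq: "equiv (UNIV - {(0,0)}) (pair_sim H)" and U: "U \<in> GH_vertices H"
  obtains a b where "(a,b) \<in> U"
proof -
  have "U \<noteq> {}" using in_quotient_imp_non_empty[OF eq] U unfolding GH_vertices_def by auto
  then obtain z where "z \<in> U" by blast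
  then show ?thesis using that by (cases z) auto
qed

theorem theorem2:
  fixes q :: nat and H :: "'a::{field, finite} set"
  assumes "\<exists>p k. prime p \<and> k \<ge> 1 \<and> q = p ^ k"
    and "card (UNIV :: 'a set) = q ^ 2"
    and "0 \<notin> H" and "1 \<in> H"
    and "\<And>x y. x \<in> H \<Longrightarrow> y \<in> H \<Longrightarrow> x * y \<in> H"
    and "\<And>x. x \<in> H \<Longrightarrow> inverse x \<in> H"
    and "card H = q + 1"
  shows "Kst_free (GH_vertices H) (GH_adj H) 3 3"
proof -
  note H0 = assms(3) and H1 = assms(4) and Hm = assms(5) and Hi = assms(6)
  have eq: "equiv (UNIV - {(0,0)}) (pair_sim H)" using equiv_ps[OF H0 H1 Hm Hi] .
  have Hq: "t^(q+1) = 1" if "t \<in> H" for t using H_pow[OF H0 Hm that] assms(7) by simp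
  have frob: "(x+y)^q = x^q + y^q" for x y :: 'a using frob_q[OF assms(1) assms(2)] .
  show ?thesis unfolding Kst_free_def
  proof
    assume "\<exists>A B. A \<subseteq> GH_vertices H \<and> B \<subseteq> GH_vertices H \<and> A \<inter> B = {} \<and> finite A \<and> finite B \<and>
            card A = 3 \<and> card B = 3 \<and> (\<forall>u\<in>A. \<forall>w\<in>B. GH_adj H u w)"
    then obtain A B where AB: "A \<subseteq> GH_vertices H" "B \<subseteq> GH_vertices H" "card A = 3" "card B = 3"
      "\<forall>u\<in>A. \<forall>w\<in>B. GH_adj H u w" by blast
    obtain U1 U2 U3 where U: "A = {U1,U2,U3}" "U1 \<noteq> U2" "U2 \<noteq> U3" "U1 \<noteq> U3"
      using AB(3) card_3_iff by metis
    obtain W1 W2 W3 where W: "B = {W1,W2,W3}" "W1 \<noteq> W2" "W2 \<noteq> W3" "W1 \<noteq> W3"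
      using AB(4) card_3_iff by metis
    have UV: "U1 \<in> GH_vertices H" "U2 \<in> GH_vertices H" "U3 \<in> GH_vertices H" using AB U by auto
    have WV: "W1 \<in> GH_vertices H" "W2 \<in> GH_vertices H" "W3 \<in> GH_vertices H" using AB W by auto
    obtain a1 b1 where r1: "(a1,b1) \<in> U1" using rep_ex[OF eq UV(1)] .
    obtain a2 b2 where r2: "(a2,b2) \<in> U2" using rep_ex[OF eq UV(2)] .
    obtain a3 b3 where r3: "(a3,b3) \<in> U3" using rep_ex[OF eq UV(3)] .
    obtain x1 y1 where s1: "(x1,y1) \<in> W1" using rep_ex[OF eq WV(1)] .
    obtain x2 y2 where s2: "(x2,y2) \<in> W2" using rep_ex[OF eq WV(2)] .
    obtain x3 y3 where s3: "(x3,y3) \<in> W3" using rep_ex[OF eq WV(3)] .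
    have adj: "GH_adj H Ui Wj" if "Ui \<in> {U1,U2,U3}" "Wj \<in> {W1,W2,W3}" for Ui Wj
      using AB(5) U W that by blast
    have P: "a*x + b*y \<in> H" if "Ui \<in> {U1,U2,U3}" "Wj \<in> {W1,W2,W3}" "(a,b) \<in> Ui" "(x,y) \<in> Wj"
      for Ui Wj a b x y
    proof -
      have "Ui \<in> GH_vertices H" "Wj \<in> GH_vertices H" using UV WV that by auto
      thus ?thesis using adj_rep[OF eq Hm _ _ adj[OF that(1,2)] that(3,4)] by blast
    qed
    show False
    proof (rule core[OF H0 Hm Hi Hq frob])
      show "a1*x1 + b1*y1 \<in> H" using P r1 s1 by blast
      show "a1*x2 + b1*y2 \<in> H" using P r1 s2 by blast
      show "a1*x3 + b1*y3 \<in> H" using P r1 s3 by blast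
      show "a2*x1 + b2*y1 \<in> H" using P r2 s1 by blast
      show "a2*x2 + b2*y2 \<in> H" using P r2 s2 by blast
      show "a2*x3 + b2*y3 \<in> H" using P r2 s3 by blast
      show "a3*x1 + b3*y1 \<in> H" using P r3 s1 by blast
      show "a3*x2 + b3*y2 \<in> H" using P r3 s2 by blast
      show "a3*x3 + b3*y3 \<in> H" using P r3 s3 by blast
      show "\<not> (\<exists>h\<in>H. x2 = h*x1 \<and> y2 = h*y1)" using distinct_rep[OF eq WV(1) WV(2) W(2) s1 s2] .
      show "\<not> (\<exists>h\<in>H. x3 = h*x1 \<and> y3 = h*y1)" using distinct_rep[OF eq WV(1) WV(3) W(4) s1 s3] .
      show "\<not> (\<exists>h\<in>H. x3 = h*x2 \<and> y3 = h*y2)" using distinct_rep[OF eq WV(2) WV(3) W(3) s2 s3] .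
      show "\<not> (\<exists>h\<in>H. a2 = h*a1 \<and> b2 = h*b1)" using distinct_rep[OF eq UV(1) UV(2) U(2) r1 r2] .
      show "\<not> (\<exists>h\<in>H. a3 = h*a1 \<and> b3 = h*b1)" using distinct_rep[OF eq UV(1) UV(3) U(4) r1 r3] .
      show "\<not> (\<exists>h\<in>H. a3 = h*a2 \<and> b3 = h*b2)" using distinct_rep[OF eq UV(2) UV(3) U(3) r2 r3] .
    qed
  qed
qed

end
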